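(* Fix $b>0$. There exists $C=C(b)>0$ such that for all $x,y\in\mathbb Z_{\ge0}$ and all integers $N\ge n\ge1$, $$\mathfrak p^N_n(x,y)\le\frac{C}{\sqrt{n+1}}\,e^{-b|x-y|/\sqrt n}.$$
   Context: Let $p_n(z)$ be the probability that simple symmetric random walk on $\mathbb Z$ started at $0$ is at $z$ at time $n$. For $x,y\in\mathbb Z_{\ge0}$ set $p^{(1/2)}_n(x,y)=p_n(x-y)-p_n(x+y+2)$, $\psi(x;n)=\sum_{y\ge0}p^{(1/2)}_n(x,y)$, and for $0\le n\le N$, $\mathfrak p^N_n(x,y)=p^{(1/2)}_n(x,y)\,\psi(y;N-n)/\psi(x;N)$. *)

theory Defs
  imports "HOL-Analysis.Analysis"
begin

text \<open>Probability that simple symmetric random walk on the integers started at 0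
  is at z at time n.\<close>
definition srw_p :: "nat \<Rightarrow> int \<Rightarrow> real" where
  "srw_p n z = (if \<bar>z\<bar> \<le> int n \<and> even (int n + z)
                then real (n choose nat ((int n + z) div 2)) / 2 ^ n else 0)"

text \<open>Killed kernel p^(1/2)_n(x,y) = p_n(x-y) - p_n(x+y+2) on nonnegative integers.\<close>
definition p_half :: "nat \<Rightarrow> nat \<Rightarrow> nat \<Rightarrow> real" where
  "p_half n x y = srw_p n (int x - int y) - srw_p n (int x + int y + 2)"

definition psi :: "nat \<Rightarrow> nat \<Rightarrow> real" where
  "psi x n = (\<Sum>\<^sub>\<infinity>y\<in>(UNIV::nat set). p_half n x y)"

definition pfrak :: "nat \<Rightarrow> nat \<Rightarrow> nat \<Rightarrow> nat \<Rightarrow> real" where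
  "pfrak N n x y = p_half n x y * psi y (N - n) / psi x N"

end

theory Submission
  imports Defs
begin


lemma q_nonneg: "srw_p n z \<ge> 0"
  by (simp add: srw_p_def)

lemma q_k: "srw_p n (2 * int k - int n) = real (n choose k) / 2 ^ n"
proof (cases "k \<le> n")
  case True
  have "nat ((int n + (2 * int k - int n)) div 2) = k" by simp
  then show ?thesis using True by (simp add: srw_p_def)
next
  case False
  then show ?thesis by (simp add: srw_p_def binomial_eq_0)
qed

lemma q_odd: "odd (int n + z) \<Longrightarrow> srw_p n z = 0"
  by (simp add: srw_p_def)

lemma q_big: "\<bar>z\<bar> > int n \<Longrightarrow> srw_p n z = 0"
  by (simp add: srw_p_def)

lemma q_cases: obtains k where "z = 2 * int k - int n" | "srw_p n z = 0"
proof (cases "even (int n + z)")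
  case True
  then obtain t where t: "int n + z = 2 * t" by (metis dvd_def)
  show ?thesis
  proof (cases "t \<ge> 0")
    case True
    then have "z = 2 * int (nat t) - int n" using t by simp
    then show ?thesis using that by blast
  next
    case False
    then have "\<bar>z\<bar> > int n" using t by auto
    then show ?thesis using that q_big by blast
  qed
next
  case False then show ?thesis using that by (auto simp: srw_p_def)
qed

lemma q_sym: "srw_p n (-z) = srw_p n z"
proof (cases "\<bar>z\<bar> \<le> int n \<and> even (int n + z)")
  case True
  then obtain t where t: "int n + z = 2 * t" by (metis dvd_def)
  have t0: "t \<ge> 0" "t \<le> int n" using True t by auto
  define k where "k = nat t"
  have z: "z = 2 * int k - int n" and kn: "k \<le> n" using t t0 by (auto simp: k_def)
  have "-z = 2 * int (n - k) - int n" using z kn by simp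
  then show ?thesis using z kn by (simp only: q_k binomial_symmetric[OF kn, symmetric])
next
  case False
  then have "\<not> (\<bar>-z\<bar> \<le> int n \<and> even (int n + - z))"
    by (metis abs_minus_cancel add_uminus_conv_diff even_add even_minus)
  then show ?thesis using False by (simp only: srw_p_def if_False)
qed

lemma binom_step: "real (Suc k) * real (n choose Suc k) = (real n - real k) * real (n choose k)"
proof (cases "k \<le> n")
  case True
  have "Suc k * (n choose Suc k) = (n - k) * (n choose k)"
    using binomial_absorption binomial_absorb_comp by metis
  then have "real (Suc k * (n choose Suc k)) = real ((n - k) * (n choose k))" by simp
  then show ?thesis using True by (simp add: of_nat_diff algebra_simps)
next
  case False then show ?thesis by (simp add: binomial_eq_0)
qed

lemma q_step_k: "srw_p n (2 * int (Suc k) - int n) * real (Suc k) = srw_p n (2 * int k - int n) * (real n - real k)"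
  using binom_step[of k n] by (simp only: q_k) (simp add: field_simps)



definition ac :: "nat \<Rightarrow> real" where "ac m = real ((2*m) choose m) / 4 ^ m"

lemma ac_step_aux:
  fixes A B x p :: real
  assumes "(x+1)*(x+1)*A = (2*x+2)*(2*x+1)*B" "x \<ge> 0" "p > 0"
  shows "A/(4*p)*(2*x+2) = B/p*(2*x+1)"
proof -
  have "(x+1)*((x+1)*A) = (x+1)*(2*(2*x+1)*B)" using assms(1) by (simp add: algebra_simps)
  then have "(x+1)*A = 2*(2*x+1)*B" using assms(2) by simp
  then have "A*(2*x+2) = B*(8*x+4)" by (simp add: algebra_simps)
  then have "A*(2*x+2)/(4*p) = B*(8*x+4)/(4*p)" by simp
  also have "\<dots> = B/p*(2*x+1)" using assms(3) by (simp add: field_simps)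
  finally show ?thesis by simp
qed

lemma ac_step: "ac (Suc m) * (2 * real m + 2) = ac m * (2 * real m + 1)"
proof -
  define A where "A = (Suc (Suc (2*m)) choose Suc m)"
  define B where "B = ((2*m) choose m)"
  define C where "C = (Suc (2*m) choose m)"
  have e1: "Suc m * A = Suc (Suc (2*m)) * C"
    unfolding A_def C_def using Suc_times_binomial by blast
  have e2: "Suc m * C = Suc (2*m) * B"
    unfolding B_def C_def using Suc_times_binomial binomial_symmetric[of m "Suc (2*m)"] by simp
  have "Suc m * (Suc m * A) = Suc (Suc (2*m)) * (Suc (2*m) * B)"
    using e1 e2 by (metis mult.left_commute)
  then have "real (Suc m * (Suc m * A)) = real (Suc (Suc (2*m)) * (Suc (2*m) * B))" by presburger
  then have E: "(real m+1)*(real m+1)*real A = (2*real m+2)*(2*real m+1)* real B"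
    by (simp only: of_nat_mult of_nat_Suc) (simp add: algebra_simps)
  have "2 * Suc m = Suc (Suc (2*m))" by simp
  then have "ac (Suc m) = real A / (4 * 4^m)" unfolding ac_def A_def by (simp only: power_Suc)
  moreover have "ac m = real B / 4^m" unfolding ac_def B_def by simp
  ultimately show ?thesis using ac_step_aux[OF E] by simp
qed

lemma ac_nonneg: "ac m \<ge> 0" by (simp add: ac_def)

lemma ac_upper: "ac m ^ 2 * (2 * real m + 1) \<le> 1"
proof (induction m)
  case 0 then show ?case by (simp add: ac_def)
next
  case (Suc m)
  have eq: "ac (Suc m) = ac m * (2 * real m + 1) / (2 * real m + 2)"
    using ac_step[of m] by (simp add: field_simps)
  have "ac (Suc m) ^ 2 * (2 * real (Suc m) + 1) = (ac m ^ 2 * (2 * real m + 1)) * ((2 * real m + 1) * (2 * real m + 3) / (2 * real m + 2)^2)"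
    unfolding eq by (simp add: field_simps power2_eq_square)
  also have "\<dots> \<le> 1 * 1"
  proof (rule mult_mono)
    have "(2 * real m + 1) * (2 * real m + 3) \<le> (2 * real m + 2)\<^sup>2"
      by (simp add: power2_eq_square algebra_simps)
    then show "(2 * real m + 1) * (2 * real m + 3) / (2 * real m + 2)\<^sup>2 \<le> 1"
      by (subst divide_le_eq_1_pos) auto
  qed (use Suc in auto)
  finally show ?case by simp
qed

lemma aux2: "(a::real) = b * t \<Longrightarrow> m > 0 \<Longrightarrow> a^2 * (4 * (m+1)) = (b^2 * (4*m)) * ((m + 1) * t^2 / m)"
proof -
  assume "a = b*t" "m > 0"
  then have "(b^2 * (4*m)) * ((m + 1) * t^2 / m) = b^2 * 4 * (m+1) * t^2" by (simp add: field_simps)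
  also have "\<dots> = a^2 * (4 * (m+1))" using \<open>a = b*t\<close> by (simp add: power_mult_distrib algebra_simps)
  finally show ?thesis ..
qed

lemma ac_lower_Suc: "ac (Suc k) ^ 2 * (4 * real (Suc k)) \<ge> 1"
proof (induction k)
  case 0 then show ?case by (simp add: ac_def power2_eq_square)
next
  case (Suc k)
  define m where "m = Suc k"
  have m1: "real m \<ge> 1" by (simp add: m_def)
  have IH: "ac m ^ 2 * (4 * real m) \<ge> 1" using Suc by (simp add: m_def)
  define t where "t = (2 * real m + 1) / (2 * real m + 2)"
  have eq: "ac (Suc m) = ac m * t"
    using ac_step[of m] unfolding t_def by (simp add: field_simps)
  define f where "f = (real m + 1) * t^2 / real m"
  have f1: "f \<ge> 1"
  proof -
    have "real m * (2 * real m + 2)\<^sup>2 \<le> (2 * real m + 1)\<^sup>2 * (real m + 1)"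
    proof -
      have "real m * (2 * real m + 2)\<^sup>2 = 4 * real m ^ 3 + 8 * real m ^ 2 + 4 * real m"
        by (simp add: power2_eq_square power3_eq_cube algebra_simps)
      moreover have "(2 * real m + 1)\<^sup>2 * (real m + 1) = 4 * real m ^ 3 + 8 * real m ^ 2 + 5 * real m + 1"
        by (simp add: power2_eq_square power3_eq_cube algebra_simps)
      ultimately show ?thesis using m1 by linarith
    qed
    moreover have "(real m + 1) * t^2 = (2 * real m + 1)\<^sup>2 * (real m + 1) / (2 * real m + 2)\<^sup>2"
      by (simp add: t_def power_divide)
    moreover have "(2 * real m + 2)\<^sup>2 > 0" by simp
    ultimately have "real m \<le> (real m + 1) * t^2"
      by (simp add: le_divide_eq)
    then show ?thesis unfolding f_def using m1 by simp
  qed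
  have "ac (Suc m) ^ 2 * (4 * (real m + 1)) = (ac m ^ 2 * (4 * real m)) * f"
    unfolding f_def using m1 aux2[OF eq] by simp
  moreover have "1 * 1 \<le> (ac m ^ 2 * (4 * real m)) * f"
    by (rule mult_mono) (use IH f1 in auto)
  ultimately have "1 \<le> ac (Suc m) ^ 2 * (4 * (real m + 1))" by simp
  then show ?case by (simp add: m_def)
qed

lemma ac_lower: "m \<ge> 1 \<Longrightarrow> ac m ^ 2 * (4 * real m) \<ge> 1"
  using ac_lower_Suc[of "m - 1"] by (cases m) auto



definition qc :: "nat \<Rightarrow> real" where "qc n = srw_p n (int (n mod 2))"

lemma qc_even: "qc (2*m) = ac m"
proof -
  have "qc (2*m) = srw_p (2*m) (2 * int m - int (2*m))" by (simp add: qc_def)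
  then show ?thesis by (simp only: q_k ac_def) (simp add: power_mult)
qed

lemma qc_odd: "qc (Suc (2*m)) = ac (Suc m)"
proof -
  have "qc (Suc (2*m)) = srw_p (Suc (2*m)) (2 * int (Suc m) - int (Suc (2*m)))" by (simp add: qc_def)
  also have "\<dots> = real (Suc (2*m) choose Suc m) / 2 ^ Suc (2*m)" by (simp only: q_k)
  also have "\<dots> = ac (Suc m)"
  proof -
    define c where "c = (Suc (2*m) choose Suc m)"
    have e3: "(Suc (2*m) choose m) = c"
      using binomial_symmetric[of m "Suc (2*m)"] by (simp add: c_def)
    have "(2 * Suc m choose Suc m) = 2 * c"
    proof -
      have "2 * Suc m = Suc (Suc (2*m))" by simp
      then have "(2 * Suc m choose Suc m) = (Suc (2*m) choose m) + (Suc (2*m) choose Suc m)"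
        by (simp only: binomial_Suc_Suc)
      then show ?thesis using e3 c_def by simp
    qed
    then have "ac (Suc m) = real (2*c) / 4 ^ Suc m" unfolding ac_def by simp
    then show ?thesis unfolding c_def[symmetric] by (simp add: power_mult power_Suc)
  qed
  finally show ?thesis .
qed

lemma qc_nonneg: "qc n \<ge> 0" by (simp add: qc_def q_nonneg)

lemma qc_upper: "qc n ^ 2 * (real n + 1) \<le> 1"
proof (cases "even n")
  case True
  then obtain m where n: "n = 2*m" by (metis evenE)
  show ?thesis using ac_upper[of m] n qc_even by simp
next
  case False
  then obtain m where n: "n = Suc (2*m)" by (metis oddE Suc_eq_plus1)
  have "ac (Suc m) ^ 2 * (real n + 1) \<le> ac (Suc m) ^ 2 * (2 * real (Suc m) + 1)"
    using n by (intro mult_left_mono) auto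
  then show ?thesis using ac_upper[of "Suc m"] n qc_odd by simp
qed

lemma qc_lower: "qc n ^ 2 * (2 * (real n + 1)) \<ge> 1"
proof (cases "even n")
  case True
  then obtain m where n: "n = 2*m" by (metis evenE)
  show ?thesis
  proof (cases "m = 0")
    case True
    have "qc 0 = 1" by (simp add: qc_def srw_p_def)
    then show ?thesis using n True by simp
  next
    case False
    have "ac m ^ 2 * (4 * real m) \<le> ac m ^ 2 * (2 * (real n + 1))"
      using n by (intro mult_left_mono) auto
    then show ?thesis using ac_lower[of m] False n qc_even by simp
  qed
next
  case False
  then obtain m where n: "n = Suc (2*m)" by (metis oddE Suc_eq_plus1)
  have "ac (Suc m) ^ 2 * (4 * real (Suc m)) = ac (Suc m) ^ 2 * (2 * (real n + 1))"
    using n by simp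
  then show ?thesis using ac_lower[of "Suc m"] n qc_odd by simp
qed

lemma qc_le: "qc n \<le> 1 / sqrt (real n + 1)"
proof -
  have "qc n \<le> sqrt (1 / (real n + 1))"
    using qc_upper[of n] qc_nonneg[of n] by (intro real_le_rsqrt) (simp add: field_simps)
  then show ?thesis by (simp add: real_sqrt_divide)
qed

lemma qc_ge: "qc n \<ge> 1 / sqrt (2 * (real n + 1))"
proof -
  have "sqrt (1 / (2 * (real n + 1))) \<le> qc n"
    using qc_lower[of n] qc_nonneg[of n] by (intro real_le_lsqrt) (simp_all add: field_simps)
  then show ?thesis by (simp add: real_sqrt_divide)
qed



lemma k0_eq: "2 * int ((n+1) div 2) - int n = int (n mod 2)"
  by presburger

lemma one_minus_le_exp: "1 - (x::real) \<le> exp (-x)"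
  using exp_ge_add_one_self[of "-x"] by simp

lemma gauss_j:
  "srw_p n (2 * int ((n+1) div 2 + j) - int n) \<le> qc n * exp (- (real j)\<^sup>2 / (real n + 1))"
proof (induction j)
  case 0
  then show ?case using k0_eq[of n] by (simp add: qc_def)
next
  case (Suc j)
  define k where "k = (n+1) div 2 + j"
  have IH: "srw_p n (2 * int k - int n) \<le> qc n * exp (- (real j)\<^sup>2 / (real n + 1))"
    using Suc by (simp add: k_def)
  have kk: "2 * int k - int n \<ge> 2 * int j" using k0_eq[of n] by (simp add: k_def)
  have goal_k: "srw_p n (2 * int (Suc k) - int n) \<le> qc n * exp (- (real (Suc j))\<^sup>2 / (real n + 1))"
  proof (cases "k < n")
    case False
    then have "srw_p n (2 * int (Suc k) - int n) = 0" by (intro q_big) simp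
    then show ?thesis using qc_nonneg[of n] by simp
  next
    case True
    have st: "srw_p n (2 * int (Suc k) - int n) * real (Suc k) = srw_p n (2 * int k - int n) * (real n - real k)"
      by (rule q_step_k)
    define r where "r = (real n - real k) / (real k + 1)"
    have eq: "srw_p n (2 * int (Suc k) - int n) = srw_p n (2 * int k - int n) * r"
      using st unfolding r_def by (simp add: field_simps)
    have r1: "r \<le> 1 - (2 * real j + 1) / (real n + 1)"
    proof -
      have a: "2 * real j + 1 \<le> 2 * real k + 1 - real n" using kk by linarith
      have b: "real k + 1 \<le> real n + 1" using True by simp
      have "(2 * real j + 1) * (real k + 1) \<le> (2 * real k + 1 - real n) * (real n + 1)"
        by (rule mult_mono[OF a b]) (use a in auto)
      then show ?thesis unfolding r_def by (simp add: field_simps)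
    qed
    have r0: "r \<ge> 0" unfolding r_def using True by simp
    have "srw_p n (2 * int (Suc k) - int n) \<le> qc n * exp (- (real j)\<^sup>2 / (real n + 1)) * exp (- ((2 * real j + 1) / (real n + 1)))"
    proof -
      have "r \<le> exp (- ((2 * real j + 1) / (real n + 1)))"
        using r1 one_minus_le_exp[of "(2 * real j + 1) / (real n + 1)"] by linarith
      then show ?thesis unfolding eq
        by (rule mult_mono[OF IH]) (use r0 q_nonneg qc_nonneg in auto)
    qed
    also have "\<dots> = qc n * exp (- (real (Suc j))\<^sup>2 / (real n + 1))"
    proof -
      have e: "(real (Suc j))\<^sup>2 = (real j)\<^sup>2 + (2 * real j + 1)"
        by (simp add: power2_eq_square algebra_simps)
      have "- (real j)\<^sup>2 / (real n + 1) + - ((2 * real j + 1) / (real n + 1)) = - ((real j)\<^sup>2 + (2 * real j + 1)) / (real n + 1)"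
        by (metis add_divide_distrib minus_add_distrib minus_divide_left)
      then have "- (real j)\<^sup>2 / (real n + 1) + - ((2 * real j + 1) / (real n + 1)) = - (real (Suc j))\<^sup>2 / (real n + 1)"
        unfolding e .
      then show ?thesis by (simp add: mult.assoc exp_add[symmetric])
    qed
    finally show ?thesis .
  qed
  then show ?case by (simp add: k_def)
qed

lemma aux3:
  fixes D Z J :: real
  assumes "D > 0" "Z \<le> 2 + 8 * J"
  shows "- J / D \<le> 1 / (4 * D) + - Z / (8 * D)"
proof -
  have "(- 8 * J) / (8 * D) \<le> (2 - Z) / (8 * D)"
    using assms by (intro divide_right_mono) auto
  moreover have "(- 8 * J) / (8 * D) = - J / D" by simp
  moreover have "(2 - Z) / (8 * D) = 1 / (4 * D) + - Z / (8 * D)"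
    using assms(1) by (simp add: field_simps)
  ultimately show ?thesis by simp
qed

lemma gauss_pos:
  assumes "z \<ge> 0"
  shows "srw_p n z \<le> 2 / sqrt (real n + 1) * exp (- (real_of_int z)\<^sup>2 / (8 * (real n + 1)))"
proof (cases z n rule: q_cases)
  case (1 k)
  have kge: "k \<ge> (n+1) div 2" using 1 assms by linarith
  define j where "j = k - (n+1) div 2"
  have kj: "k = (n+1) div 2 + j" using kge by (simp add: j_def)
  have zj: "z = int (n mod 2) + 2 * int j" using 1 kj k0_eq[of n] by simp
  have zle: "real_of_int z \<le> 2 * real j + 1" using zj by simp
  have z0: "real_of_int z \<ge> 0" using assms by simp
  have zsq: "(real_of_int z)\<^sup>2 \<le> 8 * (real j)\<^sup>2 + 2"
  proof -
    have "(real_of_int z)\<^sup>2 \<le> (2 * real j + 1)^2" using zle z0 by (intro power_mono) auto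
    also have "\<dots> \<le> 8 * (real j)\<^sup>2 + 2"
    proof -
      have "8 * (real j)\<^sup>2 + 2 - (2 * real j + 1)\<^sup>2 = (2 * real j - 1)\<^sup>2"
        by (simp add: power2_eq_square algebra_simps)
      moreover have "(2 * real j - 1)\<^sup>2 \<ge> 0" by simp
      ultimately show ?thesis by linarith
    qed
    finally show ?thesis .
  qed
  have "srw_p n z \<le> qc n * exp (- (real j)\<^sup>2 / (real n + 1))"
    using gauss_j[of n j] 1 kj by simp
  also have "\<dots> \<le> (1 / sqrt (real n + 1)) * (2 * exp (- (real_of_int z)\<^sup>2 / (8 * (real n + 1))))"
  proof (rule mult_mono)
    show "qc n \<le> 1 / sqrt (real n + 1)" by (rule qc_le)
    have "- (real j)\<^sup>2 / (real n + 1) \<le> 1 / (4 * (real n + 1)) + - (real_of_int z)\<^sup>2 / (8 * (real n + 1))"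
      using zsq by (intro aux3) auto
    then have "exp (- (real j)\<^sup>2 / (real n + 1)) \<le> exp (1 / (4 * (real n + 1))) * exp (- (real_of_int z)\<^sup>2 / (8 * (real n + 1)))"
      by (simp add: exp_add[symmetric])
    also have "\<dots> \<le> 2 * exp (- (real_of_int z)\<^sup>2 / (8 * (real n + 1)))"
    proof (rule mult_right_mono)
      have "exp (1 / (4 * (real n + 1))) \<le> 1 + 2 * (1 / (4 * (real n + 1)))"
        by (rule real_exp_bound_lemma) (auto simp: field_simps)
      also have "\<dots> \<le> 2" by (simp add: field_simps)
      finally show "exp (1 / (4 * (real n + 1))) \<le> 2" .
    qed simp
    finally show "exp (- (real j)\<^sup>2 / (real n + 1)) \<le> 2 * exp (- (real_of_int z)\<^sup>2 / (8 * (real n + 1)))" .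
  qed auto
  finally show ?thesis by simp
next
  case 2
  then show ?thesis by simp
qed

lemma gauss:
  "srw_p n z \<le> 2 / sqrt (real n + 1) * exp (- (real_of_int z)\<^sup>2 / (8 * (real n + 1)))"
proof (cases "z \<ge> 0")
  case True then show ?thesis by (rule gauss_pos)
next
  case False
  then have "srw_p n (-z) \<le> 2 / sqrt (real n + 1) * exp (- (real_of_int (-z))\<^sup>2 / (8 * (real n + 1)))"
    by (intro gauss_pos) simp
  then show ?thesis by (simp add: q_sym)
qed



lemma h_zero: "y > x + n \<Longrightarrow> p_half n x y = 0"
  unfolding p_half_def by (simp add: q_big)

lemma psi_finite: "psi x N = (\<Sum>y<R. p_half N x y)" if "R \<ge> x + N + 1"
proof -
  have "psi x N = infsum (\<lambda>y. p_half N x y) {..<R}"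
    unfolding psi_def
    by (rule infsum_cong_neutral) (use that h_zero in auto)
  then show ?thesis by simp
qed

lemma sum_h_int:
  "(\<Sum>y<R. p_half N x y) = (\<Sum>w\<in>{int x - int R + 1..int x}. srw_p N w) - (\<Sum>w\<in>{int x + 2..int x + int R + 1}. srw_p N w)"
proof (induction R)
  case 0
  then show ?case by simp
next
  case (Suc R)
  have s1: "{int x - int (Suc R) + 1..int x} = insert (int x - int R) {int x - int R + 1..int x}" by auto
  have s2: "{int x + 2..int x + int (Suc R) + 1} = insert (int x + int R + 2) {int x + 2..int x + int R + 1}" by auto
  have "(\<Sum>y<Suc R. p_half N x y) = (\<Sum>y<R. p_half N x y) + p_half N x R" by simp
  also have "\<dots> = (\<Sum>w\<in>{int x - int R + 1..int x}. srw_p N w) - (\<Sum>w\<in>{int x + 2..int x + int R + 1}. srw_p N w)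
     + (srw_p N (int x - int R) - srw_p N (int x + int R + 2))"
    using Suc by (simp add: p_half_def)
  also have "\<dots> = (\<Sum>w\<in>{int x - int (Suc R) + 1..int x}. srw_p N w) - (\<Sum>w\<in>{int x + 2..int x + int (Suc R) + 1}. srw_p N w)"
    unfolding s1 s2 by simp
  finally show ?case .
qed

lemma sum_q_trunc:
  assumes "K \<ge> int N"
  shows "(\<Sum>w\<in>{a..b}. srw_p N w) = (\<Sum>w\<in>{a..min b K}. srw_p N w)"
  by (rule sum.mono_neutral_right) (use assms in \<open>auto intro!: q_big\<close>)

lemma sum_q_refl: "(\<Sum>w\<in>{a..b}. srw_p N w) = (\<Sum>w\<in>{-b..-a}. srw_p N w)"
proof -
  have "(\<Sum>w\<in>{-b..-a}. srw_p N w) = (\<Sum>w\<in>uminus ` {a..b}. srw_p N w)"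
    by (simp add: image_uminus_atLeastAtMost)
  also have "\<dots> = (\<Sum>w\<in>{a..b}. srw_p N (-w))"
    by (subst sum.reindex) (auto simp: inj_on_def)
  finally show ?thesis by (simp add: q_sym)
qed

lemma psi_formula: "psi x N = (\<Sum>w\<in>{-int x - 1..int x}. srw_p N w)"
proof -
  define R where "R = 2 * x + N + 2"
  define K where "K = int x + int N + 1"
  have A: "(\<Sum>w\<in>{-K..int x}. srw_p N w) = (\<Sum>w\<in>{-K..-int x - 2}. srw_p N w) + (\<Sum>w\<in>{-int x - 1..int x}. srw_p N w)"
  proof -
    have "{-K..int x} = {-K..-int x - 2} \<union> {-int x - 1..int x}" by (auto simp: K_def)
    then show ?thesis by (simp add: sum.union_disjoint)
  qed
  have B: "(\<Sum>w\<in>{int x + 2..int x + int R + 1}. srw_p N w) = (\<Sum>w\<in>{-K..-int x - 2}. srw_p N w)"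
  proof -
    have "(\<Sum>w\<in>{int x + 2..int x + int R + 1}. srw_p N w) = (\<Sum>w\<in>{int x + 2..min (int x + int R + 1) K}. srw_p N w)"
      by (rule sum_q_trunc) (simp add: K_def)
    moreover have "min (int x + int R + 1) K = K" by (simp add: K_def R_def)
    ultimately show ?thesis by (simp add: sum_q_refl[where a="int x + 2" and b=K])
  qed
  have "psi x N = (\<Sum>y<R. p_half N x y)" by (rule psi_finite) (simp add: R_def)
  also have "\<dots> = (\<Sum>w\<in>{-K..int x}. srw_p N w) - (\<Sum>w\<in>{int x + 2..int x + int R + 1}. srw_p N w)"
    unfolding sum_h_int by (simp add: R_def K_def algebra_simps)
  finally show ?thesis using A B by simp
qed

lemma total_mass:
  assumes "K \<ge> int N"
  shows "(\<Sum>w\<in>{-K..K}. srw_p N w) = 1"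
proof -
  define g where "g = (\<lambda>k::nat. 2 * int k - int N)"
  have img: "g ` {..N} \<subseteq> {-K..K}" using assms by (auto simp: g_def)
  have "(\<Sum>w\<in>{-K..K}. srw_p N w) = (\<Sum>w\<in>g ` {..N}. srw_p N w)"
  proof (rule sum.mono_neutral_right)
    show "\<forall>w\<in>{-K..K} - g ` {..N}. srw_p N w = 0"
    proof
      fix w assume w: "w \<in> {-K..K} - g ` {..N}"
      show "srw_p N w = 0"
      proof (cases w N rule: q_cases)
        case (1 k)
        then have "k > N" using w by (auto simp: g_def)
        then show ?thesis using 1 by (simp add: q_k binomial_eq_0)
      qed
    qed
  qed (use img in auto)
  also have "\<dots> = (\<Sum>k\<le>N. srw_p N (g k))"
    by (subst sum.reindex) (auto simp: inj_on_def g_def)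
  also have "\<dots> = (\<Sum>k\<le>N. real (N choose k) / 2 ^ N)" by (simp add: g_def q_k)
  also have "\<dots> = real (\<Sum>k\<le>N. N choose k) / 2 ^ N" by (simp add: sum_divide_distrib)
  also have "\<dots> = 1" by (simp only: choose_row_sum) simp
  finally show ?thesis .
qed

lemma psi_nonneg: "psi x N \<ge> 0"
  unfolding psi_formula by (intro sum_nonneg) (simp add: q_nonneg)

lemma psi_le1: "psi x N \<le> 1"
proof -
  define K where "K = max (int x + 1) (int N)"
  have "psi x N \<le> (\<Sum>w\<in>{-K..K}. srw_p N w)"
    unfolding psi_formula by (rule sum_mono2) (auto simp: K_def q_nonneg)
  also have "\<dots> = 1" by (rule total_mass) (simp add: K_def)
  finally show ?thesis .
qed

lemma q_le: "srw_p N w \<le> 2 / sqrt (real N + 1)"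
proof -
  have "srw_p N w \<le> 2 / sqrt (real N + 1) * exp (- (real_of_int w)\<^sup>2 / (8 * (real N + 1)))"
    by (rule gauss)
  also have "\<dots> \<le> 2 / sqrt (real N + 1) * 1"
    by (intro mult_left_mono) auto
  finally show ?thesis by simp
qed

lemma psi_upper: "psi x N \<le> 4 * (real x + 1) / sqrt (real N + 1)"
proof -
  have "psi x N \<le> of_nat (card {-int x - 1..int x}) * (2 / sqrt (real N + 1))"
    unfolding psi_formula by (rule sum_bounded_above) (rule q_le)
  also have "of_nat (card {-int x - 1..int x}) = 2 * (real x + 1)" by simp
  finally show ?thesis by simp
qed



lemma low_j:
  "srw_p n (2 * int ((n+1) div 2 + i) - int n) \<ge> qc n * (1 - 2 * real i * (real i + 1) / (real n + 2))"
proof (induction i)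
  case 0
  then show ?case using k0_eq[of n] by (simp add: qc_def)
next
  case (Suc i)
  define k where "k = (n+1) div 2 + i"
  define S where "S = 2 * real i * (real i + 1) / (real n + 2)"
  define S' where "S' = 2 * real (Suc i) * (real (Suc i) + 1) / (real n + 2)"
  define t where "t = 4 * (real i + 1) / (real n + 2)"
  have SS: "S' = S + t"
  proof -
    have "S + t = (2 * real i * (real i + 1) + 4 * (real i + 1)) / (real n + 2)"
      unfolding S_def t_def by (simp add: add_divide_distrib)
    moreover have "2 * real i * (real i + 1) + 4 * (real i + 1) = 2 * real (Suc i) * (real (Suc i) + 1)"
      by (simp add: algebra_simps)
    ultimately show ?thesis unfolding S'_def by simp
  qed
  have IH: "srw_p n (2 * int k - int n) \<ge> qc n * (1 - S)"
    using Suc by (simp add: k_def S_def)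
  have kk: "2 * int k - int n = int (n mod 2) + 2 * int i" using k0_eq[of n] by (simp add: k_def)
  have k2: "2 * k \<ge> n" using kk by linarith
  have goal: "srw_p n (2 * int (Suc k) - int n) \<ge> qc n * (1 - S')"
  proof (cases "k < n")
    case False
    have A: "2 * real (Suc i) \<ge> real n + 1"
    proof -
      have "2 * int k - int n \<ge> int n" using False by simp
      then have "int (n mod 2) + 2 * int i \<ge> int n" using kk by simp
      then have "2 * i + 1 \<ge> n" by linarith
      then have "real n \<le> 2 * real i + 1" by linarith
      then show ?thesis by (simp add: algebra_simps)
    qed
    have B: "real (Suc i) + 1 \<ge> 2" by simp
    have "(real n + 1) * 2 \<le> 2 * real (Suc i) * (real (Suc i) + 1)"
      by (rule mult_mono[OF A B]) auto
    then have "2 * real (Suc i) * (real (Suc i) + 1) \<ge> real n + 2" by simp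
    then have "S' \<ge> 1" unfolding S'_def by simp
    then have "qc n * (1 - S') \<le> 0" using qc_nonneg[of n] by (simp add: mult_nonneg_nonpos)
    then show ?thesis using q_nonneg order_trans by blast
  next
    case True
    have st: "srw_p n (2 * int (Suc k) - int n) * real (Suc k) = srw_p n (2 * int k - int n) * (real n - real k)"
      by (rule q_step_k)
    define r where "r = (real n - real k) / (real k + 1)"
    have eq: "srw_p n (2 * int (Suc k) - int n) = srw_p n (2 * int k - int n) * r"
      using st unfolding r_def by (simp add: field_simps)
    have r0: "r \<ge> 0" unfolding r_def using True by simp
    have rt: "r \<ge> 1 - t"
    proof -
      have a: "2 * real k + 1 - real n \<le> 2 * real i + 2" using kk by linarith
      have "real n \<le> 2 * real k" using k2 by linarith
      then have b: "real k + 1 \<ge> (real n + 2) / 2" by (simp add: field_simps)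
      have "(2 * real k + 1 - real n) / (real k + 1) \<le> (2 * real i + 2) / ((real n + 2) / 2)"
        using a b by (intro frac_le) (use kk in auto)
      also have "\<dots> = t" unfolding t_def by (simp add: field_simps)
      finally have "(2 * real k + 1 - real n) / (real k + 1) \<le> t" .
      moreover have "r = 1 - (2 * real k + 1 - real n) / (real k + 1)"
        unfolding r_def by (simp add: field_simps)
      ultimately show ?thesis by simp
    qed
    show ?thesis
    proof (cases "1 - S \<ge> 0 \<and> 1 - t \<ge> 0")
      case True
      have "qc n * (1 - S') \<le> qc n * ((1 - S) * (1 - t))"
      proof (rule mult_left_mono)
        have "S * t \<ge> 0" unfolding S_def t_def by simp
        then show "1 - S' \<le> (1 - S) * (1 - t)" unfolding SS by (simp add: algebra_simps)
      qed (rule qc_nonneg)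
      also have "\<dots> = (qc n * (1 - S)) * (1 - t)" by simp
      also have "\<dots> \<le> srw_p n (2 * int k - int n) * r"
        by (rule mult_mono[OF IH rt]) (use True q_nonneg in auto)
      finally show ?thesis unfolding eq .
    next
      case False
      have "S \<ge> 0" "t \<ge> 0" unfolding S_def t_def by auto
      then have "1 - S' < 0" using False SS by linarith
      then have "qc n * (1 - S') \<le> 0" using qc_nonneg[of n] by (simp add: mult_nonneg_nonpos)
      also have "0 \<le> srw_p n (2 * int k - int n) * r" using r0 q_nonneg by simp
      finally show ?thesis unfolding eq .
    qed
  qed
  then show ?case by (simp add: k_def S'_def)
qed



lemma psi_ge_sum:
  "psi x N \<ge> (\<Sum>i\<le>m. srw_p N (2 * int ((N+1) div 2 + i) - int N))" if "2 * m \<le> x"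
proof -
  define f where "f = (\<lambda>i::nat. - (int (N mod 2) + 2 * int i))"
  have sub: "f ` {..m} \<subseteq> {-int x - 1..int x}"
  proof
    fix w assume "w \<in> f ` {..m}"
    then obtain i where i: "i \<le> m" "w = f i" by auto
    have "N mod 2 \<le> 1" by simp
    then show "w \<in> {-int x - 1..int x}" using i that by (auto simp: f_def)
  qed
  have "(\<Sum>i\<le>m. srw_p N (2 * int ((N+1) div 2 + i) - int N)) = (\<Sum>i\<le>m. srw_p N (f i))"
  proof (rule sum.cong)
    fix i
    have "2 * int ((N+1) div 2 + i) - int N = - f i" using k0_eq[of N] by (simp add: f_def)
    then show "srw_p N (2 * int ((N+1) div 2 + i) - int N) = srw_p N (f i)" by (simp add: q_sym)
  qed simp
  also have "\<dots> = (\<Sum>w\<in>f ` {..m}. srw_p N w)"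
    by (subst sum.reindex) (auto simp: inj_on_def f_def)
  also have "\<dots> \<le> (\<Sum>w\<in>{-int x - 1..int x}. srw_p N w)"
    by (rule sum_mono2) (use sub q_nonneg in auto)
  finally show ?thesis by (simp add: psi_formula)
qed

lemma sqrt2_le: "sqrt 2 \<le> 3/2"
proof -
  have "sqrt 2 \<le> sqrt ((3/2)^2)" by (intro real_sqrt_le_mono) (simp add: power2_eq_square)
  then show ?thesis by simp
qed

lemma psi_lower: "psi x N \<ge> min (1/12) ((real x + 1) / (12 * sqrt (real N + 1)))"
proof -
  define A where "A = {i::nat. 4 * i * (i + 1) \<le> N + 2}"
  have finA: "finite A" by (rule finite_subset[of _ "{..N+2}"]) (auto simp: A_def)
  have A0: "0 \<in> A" by (simp add: A_def)
  define I where "I = Max A"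
  have IA: "I \<in> A" unfolding I_def using finA A0 Max_in by blast
  have I1: "4 * I * (I + 1) \<le> N + 2" using IA by (simp add: A_def)
  have I2: "\<not> 4 * (I+1) * (I + 2) \<le> N + 2"
  proof
    assume "4 * (I+1) * (I + 2) \<le> N + 2"
    then have "I + 1 \<in> A" by (simp add: A_def)
    then have "I + 1 \<le> I" unfolding I_def using finA Max_ge by blast
    then show False by simp
  qed
  define S where "S = sqrt (real N + 1)"
  have S0: "S > 0" by (simp add: S_def)
  have qcS: "qc N \<ge> 1 / (sqrt 2 * S)"
  proof -
    have "sqrt (2 * (real N + 1)) = sqrt 2 * S" unfolding S_def by (rule real_sqrt_mult)
    then show ?thesis using qc_ge[of N] by simp
  qed
  define m where "m = min (x div 2) I"
  have m2: "2 * m \<le> x" by (simp add: m_def)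
  have "psi x N \<ge> (\<Sum>i\<le>m. srw_p N (2 * int ((N+1) div 2 + i) - int N))"
    by (rule psi_ge_sum[OF m2])
  moreover have "(\<Sum>i\<le>m. srw_p N (2 * int ((N+1) div 2 + i) - int N)) \<ge> (\<Sum>i\<le>m. qc N / 2)"
  proof (rule sum_mono)
    fix i assume "i \<in> {..m}"
    then have "i \<le> I" by (simp add: m_def)
    then have "4 * i * (i+1) \<le> 4 * I * (I + 1)" by (intro mult_mono) auto
    then have "4 * i * (i+1) \<le> N + 2" using I1 by linarith
    then have "real (4 * i * (i+1)) \<le> real (N + 2)" by (simp only: of_nat_le_iff)
    then have "4 * real i * (real i + 1) \<le> real N + 2" by (simp add: algebra_simps)
    then have "2 * real i * (real i + 1) / (real N + 2) \<le> 1/2" by (simp add: field_simps)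
    then have "1/2 \<le> 1 - 2 * real i * (real i + 1) / (real N + 2)" by linarith
    then have "qc N * (1/2) \<le> qc N * (1 - 2 * real i * (real i + 1) / (real N + 2))"
      by (rule mult_left_mono) (rule qc_nonneg)
    then have "qc N / 2 \<le> qc N * (1 - 2 * real i * (real i + 1) / (real N + 2))" by simp
    also have "\<dots> \<le> srw_p N (2 * int ((N+1) div 2 + i) - int N)" by (rule low_j)
    finally show "qc N / 2 \<le> srw_p N (2 * int ((N+1) div 2 + i) - int N)" .
  qed
  moreover have "(\<Sum>i\<le>m. qc N / 2) = (real m + 1) * (qc N / 2)" by simp
  ultimately have P: "psi x N \<ge> (real m + 1) * (qc N / 2)" by linarith
  have P2: "psi x N \<ge> (real m + 1) / (2 * sqrt 2 * S)"
  proof -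
    have "(real m + 1) / (2 * sqrt 2 * S) = (real m + 1) * ((1 / (sqrt 2 * S)) / 2)" by simp
    also have "\<dots> \<le> (real m + 1) * (qc N / 2)"
      using qcS by (intro mult_left_mono divide_right_mono) auto
    finally show ?thesis using P by linarith
  qed
  have r2: "sqrt 2 \<le> 3/2" "sqrt 2 > 0" using sqrt2_le by auto
  show ?thesis
  proof (cases "x div 2 \<le> I")
    case True
    then have mx: "m = x div 2" by (simp add: m_def)
    have "x + 1 \<le> 2 * (m + 1)" unfolding mx by presburger
    then have "real (x + 1) \<le> real (2 * (m + 1))" by (simp only: of_nat_le_iff)
    then have "real x + 1 \<le> 2 * (real m + 1)" by simp
    then have "(real x + 1) / (12 * S) \<le> (2 * (real m + 1)) / (12 * S)"
      using S0 by (intro divide_right_mono) auto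
    also have "\<dots> \<le> (real m + 1) / (2 * sqrt 2 * S)"
    proof -
      have "2 * sqrt 2 * S \<le> 6 * S" using r2 S0 by simp
      then have "(real m + 1) / (6 * S) \<le> (real m + 1) / (2 * sqrt 2 * S)"
        using r2 S0 by (intro divide_left_mono) auto
      moreover have "(2 * (real m + 1)) / (12 * S) = (real m + 1) / (6 * S)" using S0 by (simp add: field_simps)
      ultimately show ?thesis by linarith
    qed
    finally have "(real x + 1) / (12 * S) \<le> psi x N" using P2 by linarith
    then show ?thesis unfolding S_def by (simp add: min_le_iff_disj)
  next
    case False
    then have mI: "m = I" by (simp add: m_def)
    have "real N + 2 < 4 * (real I + 1) * (real I + 2)"
    proof -
      have "N + 2 < 4 * (I+1) * (I + 2)" using I2 by simp
      then have "real (N + 2) < real (4 * (I+1) * (I + 2))" by (simp only: of_nat_less_iff)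
      then show ?thesis by (simp add: algebra_simps)
    qed
    moreover have "4 * (real I + 1) * (real I + 2) \<le> 16 * (real I + 1)^2"
      by (simp add: power2_eq_square algebra_simps)
    moreover have "16 * (real I + 1)^2 = (4 * (real I + 1))^2" by (simp add: power2_eq_square algebra_simps)
    ultimately have "real N + 1 \<le> (4 * (real I + 1))^2" by linarith
    then have "S \<le> 4 * (real I + 1)" unfolding S_def by (intro real_le_lsqrt) auto
    then have "1 / (2 * sqrt 2 * 4) \<le> (real I + 1) / (2 * sqrt 2 * S)"
      using S0 r2 by (simp add: field_simps)
    moreover have "1/12 \<le> 1 / (2 * sqrt 2 * 4)"
      using r2 by (simp add: field_simps)
    moreover have "(real I + 1) / (2 * sqrt 2 * S) \<le> psi x N" using P2 mI by simp
    ultimately have "1/12 \<le> psi x N" by linarith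
    then show ?thesis by simp
  qed
qed



lemma q_step_z:
  assumes "z \<ge> 0"
  shows "srw_p n (z + 2) * (real n + real_of_int z + 2) = srw_p n z * (real n - real_of_int z)"
proof (cases z n rule: q_cases)
  case (1 k)
  have e: "z + 2 = 2 * int (Suc k) - int n" using 1 by simp
  have "srw_p n (z + 2) * real (Suc k) = srw_p n z * (real n - real k)"
    using q_step_k[of n k] by (simp only: e[symmetric] 1[symmetric])
  moreover have "real n + real_of_int z + 2 = 2 * real (Suc k)" using 1 by simp
  moreover have "real n - real_of_int z = 2 * (real n - real k)" using 1 by simp
  ultimately show ?thesis by (metis mult.left_commute)
next
  case 2
  have "srw_p n (z + 2) = 0"
  proof (cases "odd (int n + z)")
    case True
    then have "odd (int n + (z + 2))" by simp
    then show ?thesis by (rule q_odd)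
  next
    case False
    then have "\<bar>z\<bar> > int n" using 2 by (auto simp: srw_p_def split: if_splits)
    then show ?thesis using assms by (intro q_big) simp
  qed
  then show ?thesis using 2 by simp
qed

lemma delta_bound:
  assumes "z \<ge> 0"
  shows "srw_p n z - srw_p n (z + 2) \<le> srw_p n z * (2 * (real_of_int z + 1) / (real n + 1))"
proof -
  have pos: "real n + real_of_int z + 2 > 0" using assms by simp
  have "srw_p n (z + 2) = srw_p n z * (real n - real_of_int z) / (real n + real_of_int z + 2)"
    using q_step_z[OF assms, of n] pos by (simp add: field_simps)
  then have "srw_p n z - srw_p n (z + 2) = srw_p n z * ((2 * real_of_int z + 2) / (real n + real_of_int z + 2))"
    using pos by (simp add: field_simps)
  also have "\<dots> \<le> srw_p n z * (2 * (real_of_int z + 1) / (real n + 1))"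
  proof (rule mult_left_mono)
    have "(2 * real_of_int z + 2) / (real n + real_of_int z + 2) \<le> (2 * real_of_int z + 2) / (real n + 1)"
      using assms by (intro divide_left_mono) auto
    then show "(2 * real_of_int z + 2) / (real n + real_of_int z + 2) \<le> 2 * (real_of_int z + 1) / (real n + 1)"
      by (simp add: algebra_simps)
  qed (rule q_nonneg)
  finally show ?thesis .
qed

lemma h_bound1:
  "p_half n x y \<le> 2 / sqrt (real n + 1) * exp (- (real x - real y)\<^sup>2 / (8 * (real n + 1)))"
proof -
  have "p_half n x y \<le> srw_p n (int x - int y)"
    unfolding p_half_def using q_nonneg[of n "int x + int y + 2"] by simp
  also have "\<dots> \<le> 2 / sqrt (real n + 1) * exp (- (real_of_int (int x - int y))\<^sup>2 / (8 * (real n + 1)))"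
    by (rule gauss)
  finally show ?thesis by simp
qed

lemma h_bound2_le:
  assumes "y \<le> x"
  shows "p_half n x y \<le> (real y + 1) * (2 * (real x + real y + 1) / (real n + 1)) *
           (2 / sqrt (real n + 1) * exp (- (real x - real y)\<^sup>2 / (8 * (real n + 1))))"
proof -
  define f where "f = (\<lambda>i::nat. srw_p n (int x - int y + 2 * int i))"
  define E where "E = 2 / sqrt (real n + 1) * exp (- (real x - real y)\<^sup>2 / (8 * (real n + 1)))"
  have "p_half n x y = f 0 - f (Suc y)"
    unfolding p_half_def f_def by (simp add: algebra_simps)
  also have "\<dots> = (\<Sum>i<Suc y. f i - f (Suc i))" by (rule sum_lessThan_telescope'[symmetric])
  also have "\<dots> \<le> (\<Sum>i<Suc y. E * (2 * (real x + real y + 1) / (real n + 1)))"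
  proof (rule sum_mono)
    fix i assume "i \<in> {..<Suc y}"
    then have iy: "i \<le> y" by simp
    define z where "z = int x - int y + 2 * int i"
    have z0: "z \<ge> 0" using assms by (simp add: z_def)
    have zle: "real_of_int z + 1 \<le> real x + real y + 1" using iy by (simp add: z_def)
    have zge: "real_of_int z \<ge> real x - real y" by (simp add: z_def)
    have "f i - f (Suc i) = srw_p n z - srw_p n (z + 2)"
      unfolding f_def z_def by (simp add: algebra_simps)
    also have "\<dots> \<le> srw_p n z * (2 * (real_of_int z + 1) / (real n + 1))"
      by (rule delta_bound[OF z0])
    also have "\<dots> \<le> E * (2 * (real x + real y + 1) / (real n + 1))"
    proof (rule mult_mono)
      have "srw_p n z \<le> 2 / sqrt (real n + 1) * exp (- (real_of_int z)\<^sup>2 / (8 * (real n + 1)))"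
        by (rule gauss)
      also have "\<dots> \<le> E"
        unfolding E_def
      proof (intro mult_left_mono)
        have "(real x - real y)\<^sup>2 \<le> (real_of_int z)\<^sup>2"
          using zge assms by (intro power_mono) auto
        then show "exp (- (real_of_int z)\<^sup>2 / (8 * (real n + 1))) \<le> exp (- (real x - real y)\<^sup>2 / (8 * (real n + 1)))"
          by (simp add: divide_right_mono)
      qed simp
      finally show "srw_p n z \<le> E" .
      show "2 * (real_of_int z + 1) / (real n + 1) \<le> 2 * (real x + real y + 1) / (real n + 1)"
        using zle by (intro divide_right_mono) auto
    qed (use z0 q_nonneg E_def in auto)
    finally show "f i - f (Suc i) \<le> E * (2 * (real x + real y + 1) / (real n + 1))" .
  qed
  also have "\<dots> = (real y + 1) * (2 * (real x + real y + 1) / (real n + 1)) * E" by simp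
  finally show ?thesis unfolding E_def .
qed

lemma p_half_sym: "p_half n x y = p_half n y x"
proof -
  have "srw_p n (int x - int y) = srw_p n (int y - int x)"
    using q_sym[of n "int x - int y"] by simp
  then show ?thesis unfolding p_half_def by (simp add: add.commute)
qed

lemma h_bound2:
  "p_half n x y \<le> (real (min x y) + 1) * (2 * (real x + real y + 1) / (real n + 1)) *
           (2 / sqrt (real n + 1) * exp (- (real x - real y)\<^sup>2 / (8 * (real n + 1))))"
proof (cases "y \<le> x")
  case True
  have "min x y = y" using True by simp
  then show ?thesis using h_bound2_le[OF True, of n] by simp
next
  case False
  then have xy: "x \<le> y" by simp
  have A: "p_half n y x \<le> (real x + 1) * (2 * (real y + real x + 1) / (real n + 1)) *
           (2 / sqrt (real n + 1) * exp (- (real y - real x)\<^sup>2 / (8 * (real n + 1))))"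
    by (rule h_bound2_le[OF xy])
  have B: "(real y - real x)\<^sup>2 = (real x - real y)\<^sup>2" by (rule power2_commute)
  have C: "real y + real x + 1 = real x + real y + 1" by simp
  have D: "min x y = x" using xy by simp
  show ?thesis using A unfolding B C D p_half_sym[of n y x] .
qed



lemma mb: "(h::real) \<le> H \<Longrightarrow> 0 \<le> H \<Longrightarrow> 0 \<le> P \<Longrightarrow> P \<le> Q \<Longrightarrow> h * P \<le> H * Q"
  by (meson mult_mono mult_right_mono order_trans)

lemma g1: "(A::real) > 0 \<Longrightarrow> s > 0 \<Longrightarrow> A * (2 * B / (s * s)) * (2 * F) * (96 * (C / A)) = 384 * ((C / s) * (B / s)) * F"
  by (simp add: field_simps)
lemma g2: "(A::real) > 0 \<Longrightarrow> s > 0 \<Longrightarrow> A * (2 * B / (s * s)) * (2 * F) * (24 * s / A) = 96 * (B / s) * F"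
  by (simp add: field_simps)
lemma g3: "(A::real) > 0 \<Longrightarrow> (A + d) / A = 1 + d / A"
  by (simp add: add_divide_distrib)

lemma key:
  fixes x y N n :: nat
  assumes n1: "1 \<le> n" and nN: "n \<le> N"
  defines "s \<equiv> sqrt (real n + 1)"
  defines "d \<equiv> \<bar>real x - real y\<bar>"
  defines "E \<equiv> exp (- (real x - real y)\<^sup>2 / (8 * (real n + 1)))"
  shows "pfrak N n x y \<le> 384 * (4 + d / s)\<^sup>2 * (E / s)"
proof -
  define M where "M = N - n"
  define S where "S = sqrt (real N + 1)"
  define T where "T = sqrt (real M + 1)"
  define h where "h = p_half n x y"
  define a where "a = psi y M"
  define bb where "bb = psi x N"
  define u where "u = d / s"
  have s0: "s > 0" unfolding s_def by simp
  have ss: "s * s = real n + 1" unfolding s_def by simp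
  have S0: "S > 0" unfolding S_def by simp
  have T0: "T > 0" unfolding T_def by simp
  have E0: "E \<ge> 0" unfolding E_def by simp
  have d0: "d \<ge> 0" unfolding d_def by simp
  have u0: "u \<ge> 0" unfolding u_def using d0 s0 by simp
  have sn: "s \<le> S" unfolding s_def S_def using nN by simp
  have pf: "pfrak N n x y = h * (a / bb)"
    unfolding pfrak_def h_def a_def bb_def M_def by simp
  have a0: "a \<ge> 0" "a \<le> 1" unfolding a_def by (simp_all add: psi_nonneg psi_le1)
  have aT: "a \<le> 4 * (real y + 1) / T" unfolding a_def T_def by (rule psi_upper)
  have bbl: "bb \<ge> min (1/12) ((real x + 1) / (12 * S))" unfolding bb_def S_def by (rule psi_lower)
  have bb0: "bb > 0"
  proof -
    have "min (1/12) ((real x + 1) / (12 * S)) > 0" using S0 by simp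
    then show ?thesis using bbl by linarith
  qed
  have P0: "a / bb \<ge> 0" using a0 bb0 by simp
  have H1: "h \<le> 2 * (E / s)"
    unfolding h_def E_def s_def using h_bound1[of n x y] by simp
  have H2: "h \<le> (real (min x y) + 1) * (2 * (real x + real y + 1) / (s * s)) * (2 * (E / s))"
    unfolding h_def E_def ss using h_bound2[of n x y] unfolding s_def by simp
  have sq16: "16 \<le> (4 + u)\<^sup>2"
  proof -
    have "4\<^sup>2 \<le> (4 + u)\<^sup>2" using u0 by (intro power_mono) auto
    then show ?thesis by simp
  qed
  have Es: "E / s \<ge> 0" using E0 s0 by simp
  have Hn: "0 \<le> (real x + 1) * (2 * (real x + real y + 1) / (s * s)) * (2 * (E / s))"
    using Es s0 E0 by (intro mult_nonneg_nonneg divide_nonneg_pos) auto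
  have goal: "pfrak N n x y \<le> 384 * (4 + u)\<^sup>2 * (E / s)"
  proof (cases "real x + 1 \<ge> S")
    case True
    then have "(real x + 1) / (12 * S) \<ge> 1/12" using S0 by (simp add: field_simps)
    then have "bb \<ge> 1/12" using bbl by linarith
    then have "a / bb \<le> 12"
      using a0 bb0 by (simp add: divide_le_eq)
    then have "h * (a / bb) \<le> (2 * (E / s)) * 12"
      by (intro mb[OF H1]) (use Es P0 in auto)
    also have "\<dots> = 24 * (E / s)" by simp
    also have "\<dots> \<le> (384 * (4 + u)\<^sup>2) * (E / s)"
      using sq16 Es by (intro mult_right_mono) auto
    finally show ?thesis unfolding pf .
  next
    case False
    then have xS: "real x + 1 < S" by simp
    then have "(real x + 1) / (12 * S) \<le> 1/12" using S0 by (simp add: field_simps)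
    then have "min (1/12) ((real x + 1) / (12 * S)) = (real x + 1) / (12 * S)" by (rule min_absorb2)
    then have bbx: "bb \<ge> (real x + 1) / (12 * S)" using bbl by simp
    have x1: "real x + 1 > 0" by simp
    show ?thesis
    proof (cases "4 * (real M + 1) \<ge> real N + 1")
      case True
      have ST: "S \<le> 2 * T"
      proof -
        have "S \<le> sqrt (4 * (real M + 1))" unfolding S_def using True by (intro real_sqrt_le_mono) simp
        also have "\<dots> = sqrt 4 * T" unfolding T_def by (rule real_sqrt_mult)
        also have "sqrt 4 = (2::real)" using real_sqrt_abs[of 2] by simp
        finally show ?thesis by simp
      qed
      have P1: "a / bb \<le> 96 * ((real y + 1) / (real x + 1))"
      proof -
        have "a / bb \<le> (4 * (real y + 1) / T) / ((real x + 1) / (12 * S))"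
          by (rule frac_le) (use aT bbx S0 T0 x1 a0 in auto)
        also have "\<dots> = 48 * (real y + 1) * S / ((real x + 1) * T)" using S0 T0 x1 by (simp add: field_simps)
        also have "\<dots> \<le> 48 * (real y + 1) * (2 * T) / ((real x + 1) * T)"
          using ST T0 by (intro divide_right_mono mult_left_mono) auto
        also have "\<dots> = 96 * ((real y + 1) / (real x + 1))"
        proof -
          have "48 * (real y + 1) * (2 * T) / ((real x + 1) * T) = (96 * (real y + 1) * T) / ((real x + 1) * T)"
            by (simp add: algebra_simps)
          also have "\<dots> = 96 * (real y + 1) / (real x + 1)"
            using T0 by (intro nonzero_mult_divide_mult_cancel_right) simp
          finally show ?thesis by simp
        qed
        finally show ?thesis .
      qed
      show ?thesis
      proof (cases "y \<le> x")
        case True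
        then have "(real y + 1) / (real x + 1) \<le> 1" by simp
        then have "a / bb \<le> 96" using P1 by linarith
        then have "h * (a / bb) \<le> (2 * (E / s)) * 96"
          by (intro mb[OF H1]) (use Es P0 in auto)
        also have "\<dots> = 192 * (E / s)" by simp
        also have "\<dots> \<le> (384 * (4 + u)\<^sup>2) * (E / s)"
          using sq16 Es by (intro mult_right_mono) auto
        finally show ?thesis unfolding pf .
      next
        case False
        then have yx: "real y = real x + d" unfolding d_def by simp
        show ?thesis
        proof (cases "real x + 1 \<ge> s")
          case True
          have "real y + 1 = (real x + 1) + d" using yx by simp
          then have "(real y + 1) / (real x + 1) = 1 + d / (real x + 1)" using g3[OF x1, of d] by metis
          also have "\<dots> \<le> 1 + u" unfolding u_def using True s0 d0 by (simp add: divide_left_mono)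
          finally have "(real y + 1) / (real x + 1) \<le> 1 + u" .
          then have "96 * ((real y + 1) / (real x + 1)) \<le> 96 * (1 + u)" by (rule mult_left_mono) simp
          then have "a / bb \<le> 96 * (1 + u)" using P1 by linarith
          then have "h * (a / bb) \<le> (2 * (E / s)) * (96 * (1 + u))"
            by (intro mb[OF H1]) (use Es P0 in auto)
          also have "\<dots> \<le> 384 * (4 + u)\<^sup>2 * (E / s)"
          proof -
            have "2 * (96 * (1 + u)) \<le> 384 * (4 + u)\<^sup>2" using u0 by (simp add: power2_eq_square algebra_simps)
            then have "(2 * (96 * (1 + u))) * (E / s) \<le> (384 * (4 + u)\<^sup>2) * (E / s)"
              using Es by (rule mult_right_mono)
            then show ?thesis by (simp add: algebra_simps)
          qed
          finally show ?thesis unfolding pf .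
        next
          case False
          then have xs: "real x + 1 < s" by simp
          have mn: "min x y = x" using yx d0 by simp
          have H2': "h \<le> (real x + 1) * (2 * (real x + real y + 1) / (s * s)) * (2 * (E / s))"
            using H2 unfolding mn .
          have "h * (a / bb) \<le> ((real x + 1) * (2 * (real x + real y + 1) / (s * s)) * (2 * (E / s))) * (96 * ((real y + 1) / (real x + 1)))"
            by (rule mb[OF H2' Hn P0 P1])
          also have "\<dots> = 384 * (((real y + 1) / s) * ((real x + real y + 1) / s)) * (E / s)"
            by (rule g1[OF x1 s0])
          also have "\<dots> \<le> 384 * ((1 + u) * (2 + u)) * (E / s)"
          proof -
            have A: "(real y + 1) / s \<le> 1 + u"
            proof -
              have "real y + 1 \<le> s + d" using yx xs by simp
              then have "(real y + 1) / s \<le> (s + d) / s" using s0 by (simp add: divide_right_mono)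
              also have "\<dots> = 1 + u" unfolding u_def using g3[OF s0, of d] by simp
              finally show ?thesis .
            qed
            have B: "(real x + real y + 1) / s \<le> 2 + u"
            proof -
              have "real x + real y + 1 \<le> 2 * s + d" using yx xs by simp
              then have "(real x + real y + 1) / s \<le> (2 * s + d) / s" using s0 by (simp add: divide_right_mono)
              also have "\<dots> = 2 + u" unfolding u_def using s0 by (simp add: add_divide_distrib)
              finally show ?thesis .
            qed
            have "((real y + 1) / s) * ((real x + real y + 1) / s) \<le> (1 + u) * (2 + u)"
              by (rule mult_mono[OF A B]) (use u0 s0 in auto)
            then show ?thesis using Es by (intro mult_right_mono mult_left_mono) auto
          qed
          also have "\<dots> \<le> 384 * (4 + u)\<^sup>2 * (E / s)"
          proof -
            have "(1 + u) * (2 + u) \<le> (4 + u)\<^sup>2" using u0 by (simp add: power2_eq_square algebra_simps)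
            then show ?thesis using Es by (intro mult_right_mono mult_left_mono) auto
          qed
          finally show ?thesis unfolding pf .
        qed
      qed
    next
      case False
      have Ss: "S \<le> 2 * s"
      proof -
        have "real N + 1 = real M + 1 + real n" unfolding M_def using nN by simp
        then have "real N + 1 \<le> 4 * (real n + 1)" using False by simp
        then have "S \<le> sqrt (4 * (real n + 1))" unfolding S_def by (intro real_sqrt_le_mono) simp
        also have "\<dots> = sqrt 4 * s" unfolding s_def by (rule real_sqrt_mult)
        also have "sqrt 4 = (2::real)" using real_sqrt_abs[of 2] by simp
        finally show ?thesis by simp
      qed
      have P1: "a / bb \<le> 24 * s / (real x + 1)"
      proof -
        have "a / bb \<le> 1 / ((real x + 1) / (12 * S))"
          by (rule frac_le) (use a0 bbx S0 x1 in auto)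
        also have "\<dots> = 12 * S / (real x + 1)" by simp
        also have "\<dots> \<le> 12 * (2 * s) / (real x + 1)"
          using Ss x1 by (intro divide_right_mono) auto
        finally show ?thesis by simp
      qed
      have H2': "h \<le> (real x + 1) * (2 * (real x + real y + 1) / (s * s)) * (2 * (E / s))"
      proof -
        have "(real (min x y) + 1) * (2 * (real x + real y + 1) / (s * s)) * (2 * (E / s))
            \<le> (real x + 1) * (2 * (real x + real y + 1) / (s * s)) * (2 * (E / s))"
          using Es s0 by (intro mult_right_mono) auto
        then show ?thesis using H2 by linarith
      qed
      have "h * (a / bb) \<le> ((real x + 1) * (2 * (real x + real y + 1) / (s * s)) * (2 * (E / s))) * (24 * s / (real x + 1))"
        by (rule mb[OF H2' Hn P0 P1])
      also have "\<dots> = 96 * ((real x + real y + 1) / s) * (E / s)"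
        by (rule g2[OF x1 s0])
      also have "\<dots> \<le> 96 * (4 + u) * (E / s)"
      proof -
        have "real y \<le> real x + d" unfolding d_def by simp
        then have "real x + real y + 1 \<le> 2 * (real x + 1) + d" by simp
        also have "\<dots> \<le> 4 * s + d" using xS Ss by simp
        finally have "(real x + real y + 1) / s \<le> (4 * s + d) / s" using s0 by (simp add: divide_right_mono)
        also have "\<dots> = 4 + u" unfolding u_def using s0 by (simp add: add_divide_distrib)
        finally show ?thesis using Es by (intro mult_right_mono mult_left_mono) auto
      qed
      also have "\<dots> \<le> 384 * (4 + u)\<^sup>2 * (E / s)"
      proof -
        have "96 * (4 + u) \<le> 384 * (4 + u)\<^sup>2" using u0 by (simp add: power2_eq_square algebra_simps)
        then show ?thesis using Es by (intro mult_right_mono) auto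
      qed
      finally show ?thesis unfolding pf .
    qed
  qed
  then show ?thesis unfolding u_def .
qed



lemma final_ineq:
  fixes u b :: real
  assumes u0: "u \<ge> 0"
  shows "(4 + u)\<^sup>2 * exp (- u\<^sup>2 / 8) \<le> 16 * exp (2 * (2 * b + 1/2)\<^sup>2) * exp (- (2 * b * u))"
proof -
  define B where "B = 2 * b + 1/2"
  have a0: "1 + u / 4 \<le> exp (u / 4)" by (rule exp_ge_add_one_self)
  have a: "4 + u \<le> 4 * exp (u / 4)" using a0 by linarith
  have "(4 + u)\<^sup>2 \<le> (4 * exp (u / 4))\<^sup>2" using a u0 by (intro power_mono) auto
  also have "\<dots> = 16 * exp (u / 2)"
    by (simp add: power_mult_distrib power2_eq_square exp_add[symmetric])
  finally have A: "(4 + u)\<^sup>2 \<le> 16 * exp (u / 2)" .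
  have "u / 2 + - u\<^sup>2 / 8 \<le> 2 * B\<^sup>2 + - (2 * b * u)"
  proof -
    have "0 \<le> (u - 4 * B)\<^sup>2 / 8" by simp
    moreover have "(u - 4 * B)\<^sup>2 / 8 = 2 * B\<^sup>2 + - (2 * b * u) - (u / 2 + - u\<^sup>2 / 8)"
      unfolding B_def by (simp add: power2_eq_square field_simps)
    ultimately show ?thesis by linarith
  qed
  then have C: "exp (u / 2) * exp (- u\<^sup>2 / 8) \<le> exp (2 * B\<^sup>2) * exp (- (2 * b * u))"
    by (simp add: exp_add[symmetric])
  have "(4 + u)\<^sup>2 * exp (- u\<^sup>2 / 8) \<le> (16 * exp (u / 2)) * exp (- u\<^sup>2 / 8)"
    using A by (intro mult_right_mono) auto
  also have "\<dots> = 16 * (exp (u / 2) * exp (- u\<^sup>2 / 8))" by simp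
  also have "\<dots> \<le> 16 * (exp (2 * B\<^sup>2) * exp (- (2 * b * u)))" using C by simp
  finally show ?thesis by (simp add: B_def)
qed

theorem lemma3p8:
  fixes b :: real
  assumes "b > 0"
  shows "\<exists>C>0. \<forall>x y N n :: nat. 1 \<le> n \<longrightarrow> n \<le> N \<longrightarrow>
           pfrak N n x y \<le> C / sqrt (real n + 1) * exp (- b * \<bar>real x - real y\<bar> / sqrt (real n))"
proof (intro exI[of _ "384 * (16 * exp (2 * (2 * b + 1/2)\<^sup>2))"] conjI allI impI)
  show "0 < 384 * (16 * exp (2 * (2 * b + 1/2)\<^sup>2))" by simp
  fix x y N n :: nat
  assume n1: "1 \<le> n" and nN: "n \<le> N"
  define s where "s = sqrt (real n + 1)"
  define d where "d = \<bar>real x - real y\<bar>"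
  define E where "E = exp (- (real x - real y)\<^sup>2 / (8 * (real n + 1)))"
  define u where "u = d / s"
  define K where "K = 16 * exp (2 * (2 * b + 1/2)\<^sup>2)"
  have s0: "s > 0" unfolding s_def by simp
  have d0: "d \<ge> 0" unfolding d_def by simp
  have u0: "u \<ge> 0" unfolding u_def using s0 d0 by simp
  have Eu: "E = exp (- u\<^sup>2 / 8)"
  proof -
    have "u\<^sup>2 = (real x - real y)\<^sup>2 / (real n + 1)"
      unfolding u_def d_def s_def by (simp add: power_divide)
    then show ?thesis unfolding E_def by (simp add: field_simps)
  qed
  have k: "pfrak N n x y \<le> 384 * (4 + u)\<^sup>2 * (E / s)"
    using key[OF n1 nN, of x y] unfolding s_def d_def E_def u_def by simp
  have f: "(4 + u)\<^sup>2 * E \<le> K * exp (- (2 * b * u))"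
    unfolding Eu K_def by (rule final_ineq[OF u0])
  have sn: "s \<le> 2 * sqrt (real n)"
  proof -
    have "s \<le> sqrt (4 * real n)" unfolding s_def using n1 by (intro real_sqrt_le_mono) simp
    also have "\<dots> = sqrt 4 * sqrt (real n)" by (rule real_sqrt_mult)
    also have "sqrt 4 = (2::real)" using real_sqrt_abs[of 2] by simp
    finally show ?thesis by simp
  qed
  have sqn: "sqrt (real n) > 0" using n1 by simp
  have ex: "exp (- (2 * b * u)) \<le> exp (- b * d / sqrt (real n))"
  proof -
    have "d / sqrt (real n) \<le> 2 * u"
    proof -
      have "d / sqrt (real n) = 2 * d / (2 * sqrt (real n))" by simp
      also have "\<dots> \<le> 2 * d / s" using sn s0 d0 sqn by (intro divide_left_mono) auto
      also have "\<dots> = 2 * u" unfolding u_def by simp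
      finally show ?thesis .
    qed
    then have "b * (d / sqrt (real n)) \<le> b * (2 * u)" using assms by (intro mult_left_mono) auto
    then show ?thesis by simp
  qed
  have "pfrak N n x y \<le> 384 * ((4 + u)\<^sup>2 * E) / s" using k by simp
  also have "\<dots> \<le> 384 * (K * exp (- (2 * b * u))) / s"
    using f s0 by (intro divide_right_mono mult_left_mono) auto
  also have "\<dots> \<le> 384 * (K * exp (- b * d / sqrt (real n))) / s"
    using ex s0 by (intro divide_right_mono mult_left_mono) (auto simp: K_def)
  also have "\<dots> = 384 * K / sqrt (real n + 1) * exp (- b * \<bar>real x - real y\<bar> / sqrt (real n))"
    unfolding s_def d_def by simp
  finally show "pfrak N n x y \<le> 384 * (16 * exp (2 * (2 * b + 1/2)\<^sup>2)) / sqrt (real n + 1) * exp (- b * \<bar>real x - real y\<bar> / sqrt (real n))"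
    unfolding K_def .
qed


end
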